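(* Let $b \ge 2$ and $k \ge 1$ be integers, and set $B = b^k$. Let $m\ge 1$ be an integer with $\gcd(m,b)=1$, and let $r$ be an integer with $0\le r<m$. Then there exist infinitely many positive integers $n$ with $n\equiv r \pmod{m}$ such that \[ \mathsf{s}_b(n) \mid n \quad\text{and}\quad \mathsf{s}_B(n) \mid n, \] i.e., infinitely many such $n$ that are simultaneously $b$-Niven and $b^k$-Niven. Moreover, for any $s_0\geq 1$, there exists such an $n$ (positive, $n\equiv r \pmod m$, with $\mathsf{s}_b(n)\mid n$ and $\mathsf{s}_B(n)\mid n$) with $\mathsf{s}_b(n)=\mathsf{s}_B(n)\geq s_0$.
   Context: For an integer base $g\ge 2$ and a positive integer $c$ with base-$g$ expansion $c=\sum_{i=0}^{L} d_i g^i$, $d_i\in\{0,1,\dots,g-1\}$, $d_L\neq 0$, the base-$g$ digit sum is $\mathsf{s}_g(c)=\sum_{i=0}^L d_i$ (and $\mathsf{s}_g(0)=0$). A positive integer $c$ is called $g$-Niven if $\mathsf{s}_g(c)\mid c$. *)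

theory Defs
  imports Main
begin

fun digit_sum :: "nat \<Rightarrow> nat \<Rightarrow> nat" where
  "digit_sum g c = (if g < 2 \<or> c = 0 then 0 else c mod g + digit_sum g (c div g))"

declare digit_sum.simps[simp del]

end

theory Submission
  imports Defs "HOL-Number_Theory.Number_Theory"
begin

lemma ds0[simp]: "digit_sum g 0 = 0"
  by (subst digit_sum.simps) simp

lemma ds1: "g \<ge> 2 \<Longrightarrow> digit_sum g 1 = 1"
  by (subst digit_sum.simps) simp

lemma ds_step:
  assumes "g \<ge> 2" "a < g"
  shows "digit_sum g (g * q + a) = a + digit_sum g q"
proof (cases "g * q + a = 0")
  case True
  then have "q = 0" "a = 0" using assms by auto
  then show ?thesis by simp
next
  case False
  then show ?thesis using assms
    by (subst digit_sum.simps) (simp add: ds0)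
qed

lemma ds_split:
  assumes "g \<ge> 2" "a < g ^ e"
  shows "digit_sum g (a + g ^ e * c) = digit_sum g a + digit_sum g c"
  using assms(2)
proof (induction e arbitrary: a)
  case 0
  then show ?case by simp
next
  case (Suc e)
  have lt: "a div g < g ^ e" using Suc.prems assms(1)
    by (simp add: less_mult_imp_div_less mult.commute)
  have md: "a mod g < g" using assms(1) by simp
  have "a + g ^ Suc e * c = g * (a div g + g ^ e * c) + a mod g"
    by (simp add: algebra_simps)
  then have "digit_sum g (a + g ^ Suc e * c) = a mod g + digit_sum g (a div g + g ^ e * c)"
    using ds_step[OF assms(1) md] by simp
  also have "\<dots> = a mod g + digit_sum g (a div g) + digit_sum g c"
    using Suc.IH[OF lt] by simp
  also have "a mod g + digit_sum g (a div g) = digit_sum g a"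
    using ds_step[OF assms(1) md, of "a div g"] by simp
  finally show ?case .
qed

lemma ds_geom:
  assumes "g \<ge> 2" "e \<ge> 1"
  shows "digit_sum g (\<Sum>i<t. (g ^ e) ^ i) = t"
proof (induction t)
  case 0
  then show ?case by simp
next
  case (Suc t)
  have "(\<Sum>i<Suc t. (g ^ e) ^ i) = 1 + g ^ e * (\<Sum>i<t. (g ^ e) ^ i)"
    unfolding sum.lessThan_Suc_shift by (simp add: sum_distrib_left)
  moreover have "(1::nat) < g ^ e"
  proof -
    have "g ^ 1 \<le> g ^ e" using assms by (intro power_increasing) auto
    then show ?thesis using assms by simp
  qed
  moreover have "digit_sum g 1 = 1" using ds1[OF assms(1)] .
  ultimately show ?case using ds_split[OF assms(1), of 1 e] Suc.IH by simp
qed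

lemma main:
  fixes b k m r s0 :: nat
  assumes "b \<ge> 2" and "k \<ge> 1" and "m \<ge> 1" and "coprime m b" and "r < m"
  shows "\<exists>n::nat. n \<ge> s0 \<and> n > 0 \<and> n mod m = r \<and>
               digit_sum b n dvd n \<and> digit_sum (b ^ k) n dvd n \<and>
               digit_sum b n = digit_sum (b ^ k) n \<and> digit_sum b n \<ge> s0"
proof -
  obtain x where x: "[m * x = 1] (mod b)"
    using cong_solve_coprime_nat[OF assms(4)] by auto
  define t where "t = r + m * (x * (1 + (b - 1) * r)) + m * b * (s0 + 1)"
  have teq: "t = r + m * (x * (1 + (b - 1) * r) + b * (s0 + 1))"
    unfolding t_def by (simp add: algebra_simps)
  have tmod: "t mod m = r" unfolding teq using assms(5) by simp
  have c1: "[m * x * (1 + (b - 1) * r) = 1 * (1 + (b - 1) * r)] (mod b)"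
    by (rule cong_mult[OF x cong_refl])
  have c2: "[m * b * (s0 + 1) = 0] (mod b)" by (simp add: cong_0_iff)
  have "[r + m * x * (1 + (b - 1) * r) + m * b * (s0 + 1) = r + 1 * (1 + (b - 1) * r) + 0] (mod b)"
    by (rule cong_add[OF cong_add[OF cong_refl c1] c2])
  moreover have eqt: "r + m * x * (1 + (b - 1) * r) + m * b * (s0 + 1) = t"
    unfolding t_def by (simp only: mult.assoc)
  ultimately have A: "[t = r + 1 * (1 + (b - 1) * r) + 0] (mod b)"
    by simp
  obtain b' where b': "b = Suc b'" using assms(1) by (cases b) auto
  have B: "r + 1 * (1 + (b - 1) * r) + 0 = 1 + b * r" unfolding b' by simp
  have C: "[1 + b * r = 1] (mod b)" unfolding cong_def by (metis mod_mult_self2 mult.commute)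
  have "[t = 1] (mod b)"
    using cong_trans[OF A[unfolded B] C] .
  then have cb: "coprime t b"
    using cong_imp_coprime[of 1 t b] cong_sym by auto
  have tge: "t \<ge> s0 + 1"
  proof -
    have "m * b \<ge> 1" using assms(1,3) by simp
    then have "m * b * (s0 + 1) \<ge> 1 * (s0 + 1)" by (intro mult_le_mono1)
    then have "m * b * (s0 + 1) \<ge> s0 + 1" by simp
    then show ?thesis unfolding t_def by linarith
  qed
  define M where "M = m * t"
  have Mpos: "M > 0" using assms(3) tge unfolding M_def by simp
  have cM: "coprime (b ^ k) M" unfolding M_def using assms(4) cb
    by (simp add: coprime_commute)
  define d where "d = totient M"
  have d1: "d \<ge> 1" using Mpos unfolding d_def
    by (simp add: Suc_le_eq totient_gt_0_iff)
  define X where "X = (b ^ k) ^ d"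
  have X1: "[X = 1] (mod M)" unfolding X_def d_def using euler_theorem[OF cM] .
  define n where "n = (\<Sum>i<t. X ^ i)"
  have "[n = (\<Sum>i<t. 1)] (mod M)" unfolding n_def
    by (rule cong_sum) (rule cong_pow[OF X1, of _, unfolded power_one])
  then have nM: "[n = t] (mod M)" by simp
  have nM': "[n = t] (mod t * m)" using nM unfolding M_def mult.commute[of m t] .
  have "[n = t] (mod t)"
    by (rule cong_modulus_mult_nat[OF nM'])
  then have nt: "t dvd n" by (simp add: cong_def mod_eq_0_iff_dvd)
  have "[n = t] (mod m)"
    using cong_modulus_mult_nat[of n t m t] nM unfolding M_def .
  then have nm: "n mod m = r" using tmod by (simp add: cong_def)
  have Xge: "X \<ge> 1" unfolding X_def using assms(1) by simp
  have ngt: "n \<ge> t"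
  proof -
    have "(\<Sum>i<t. (1::nat)) \<le> n" unfolding n_def
      by (rule sum_mono) (rule one_le_power[OF Xge])
    then show ?thesis by simp
  qed
  have "b ^ 1 \<le> b ^ k" using assms(1,2) by (intro power_increasing) auto
  then have bk2: "b ^ k \<ge> 2" using assms(1) by simp
  have dsB: "digit_sum (b ^ k) n = t" unfolding n_def X_def
    using ds_geom[OF bk2 d1] .
  have kd: "k * d \<ge> 1" using assms(2) d1 by simp
  have Xeq: "X = b ^ (k * d)" unfolding X_def by (rule power_mult[symmetric])
  have dsb: "digit_sum b n = t" unfolding n_def Xeq
    using ds_geom[OF assms(1) kd] .
  show ?thesis
    using dsB dsb nt nm ngt tge by (intro exI[of _ n]) simp
qed

theorem theorem1p1:
  fixes b k m r :: nat
  assumes "b \<ge> 2" and "k \<ge> 1" and "m \<ge> 1" and "coprime m b" and "r < m"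
  shows "infinite {n::nat. n > 0 \<and> n mod m = r \<and>
                    digit_sum b n dvd n \<and> digit_sum (b ^ k) n dvd n}
       \<and> (\<forall>s0::nat. s0 \<ge> 1 \<longrightarrow>
            (\<exists>n::nat. n > 0 \<and> n mod m = r \<and>
               digit_sum b n dvd n \<and> digit_sum (b ^ k) n dvd n \<and>
               digit_sum b n = digit_sum (b ^ k) n \<and> digit_sum b n \<ge> s0))"
proof
  let ?S = "{n::nat. n > 0 \<and> n mod m = r \<and>
                    digit_sum b n dvd n \<and> digit_sum (b ^ k) n dvd n}"
  have ex: "\<And>s0. \<exists>n::nat. n \<ge> s0 \<and> n > 0 \<and> n mod m = r \<and>
               digit_sum b n dvd n \<and> digit_sum (b ^ k) n dvd n \<and>
               digit_sum b n = digit_sum (b ^ k) n \<and> digit_sum b n \<ge> s0"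
    by (rule main[OF assms])
  show "infinite ?S"
  proof
    assume fin: "finite ?S"
    obtain N where N0: "\<forall>n \<in> ?S. n \<le> N"
      using fin unfolding finite_nat_set_iff_bounded_le by (elim exE)
    have N: "\<And>n. n \<in> ?S \<Longrightarrow> n \<le> N" using N0 by (rule bspec)
    obtain n where nn: "n \<ge> N + 1 \<and> n > 0 \<and> n mod m = r \<and>
               digit_sum b n dvd n \<and> digit_sum (b ^ k) n dvd n \<and>
               digit_sum b n = digit_sum (b ^ k) n \<and> digit_sum b n \<ge> N + 1"
      using ex[of "N+1"] by (elim exE)
    then have "n \<in> ?S" by simp
    then have "n \<le> N" by (rule N)
    then show False using nn by simp
  qed
next
  show "\<forall>s0::nat. s0 \<ge> 1 \<longrightarrow>
            (\<exists>n::nat. n > 0 \<and> n mod m = r \<and>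
               digit_sum b n dvd n \<and> digit_sum (b ^ k) n dvd n \<and>
               digit_sum b n = digit_sum (b ^ k) n \<and> digit_sum b n \<ge> s0)"
  proof (intro allI impI)
    fix s0 :: nat
    obtain n where nn: "n \<ge> s0 \<and> n > 0 \<and> n mod m = r \<and>
               digit_sum b n dvd n \<and> digit_sum (b ^ k) n dvd n \<and>
               digit_sum b n = digit_sum (b ^ k) n \<and> digit_sum b n \<ge> s0"
      using main[OF assms, of s0] by (elim exE)
    show "\<exists>n::nat. n > 0 \<and> n mod m = r \<and>
               digit_sum b n dvd n \<and> digit_sum (b ^ k) n dvd n \<and>
               digit_sum b n = digit_sum (b ^ k) n \<and> digit_sum b n \<ge> s0"
      by (rule exI[of _ n]) (use nn in simp)
  qed
qed

end
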